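(* Let $h$ and $k$ be integers with $k>0$, $\gcd(h,k)=1$, and $h+k$ odd. Then $$B_{1}(h,k)=\frac{1}{2}(1-h)\,S(h,k).$$
   Context: $[x]$ denotes the greatest integer $\le x$. For integers $h,k$ with $k>0$ and $\gcd(h,k)=1$, define $$B_{1}(h,k)=\sum_{j=1}^{k-1}(-1)^{j+\left[\frac{hj}{k}\right]}\left[\frac{hj}{k}\right].$$ The Hardy sum $S(h,k)$ is defined by $S(h,k)=\sum_{j \bmod k}(-1)^{j+1+\left[\frac{jh}{k}\right]}$, the sum running over a complete residue system modulo $k$. *)

theory Defs
  imports Complex_Main
begin

definition B1 :: "int \<Rightarrow> int \<Rightarrow> int" where
  "B1 h k = (\<Sum>j\<in>{1..k-1}. (-1) ^ nat \<bar>j + \<lfloor>real_of_int (h*j) / real_of_int k\<rfloor>\<bar>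
                 * \<lfloor>real_of_int (h*j) / real_of_int k\<rfloor>)"

text \<open>(-1)^e for an integer e is written (-1)^nat|e|. Hardy sum; the representative of the residue class 0 contributes nothing, i.e. the sum runs over j = 1, ..., k-1.\<close>
definition hardyS :: "int \<Rightarrow> int \<Rightarrow> int" where
  "hardyS h k = (\<Sum>j\<in>{1..k-1}. (-1) ^ nat \<bar>j + 1 + \<lfloor>real_of_int (j*h) / real_of_int k\<rfloor>\<bar>)"

end

theory Submission
  imports Defs
begin

lemma sgn_pow: "(-1::int) ^ nat \<bar>e\<bar> = (if even e then 1 else -1)"
proof -
  have "even (nat \<bar>e\<bar>) \<longleftrightarrow> even e" by (simp add: even_nat_iff)
  then show ?thesis by (simp add: minus_one_power_iff)
qed

lemma floor_eq: "\<lfloor>real_of_int a / real_of_int b\<rfloor> = a div b"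
  by (metis floor_divide_of_int_eq of_int_of_nat_eq)

lemma floor_eq2: "\<lfloor>real_of_int a * real_of_int c / real_of_int b\<rfloor> = (a*c) div b"
  by (metis floor_eq of_int_mult)

lemma refl_div:
  fixes h k j :: int
  assumes "k > 0" "gcd h k = 1" "1 \<le> j" "j \<le> k - 1"
  shows "(h * (k - j)) div k = h - 1 - (h*j) div k"
proof -
  have nd: "\<not> k dvd h * j"
  proof
    assume "k dvd h * j"
    then have "k dvd j" using assms(2) by (metis coprime_dvd_mult_right_iff gcd.commute coprime_iff_gcd_eq_1)
    then show False using assms(3,4) zdvd_imp_le by fastforce
  qed
  have "h * (k - j) = (- (h*j)) + h * k" by (simp add: algebra_simps)
  then have "(h * (k - j)) div k = h + (- (h*j)) div k" using assms(1)
    by (metis div_mult_self1 less_irrefl)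
  also have "(- (h*j)) div k = - ((h*j) div k) - 1"
    using nd assms(1) by (simp add: zdiv_zminus1_eq_if dvd_eq_mod_eq_0)
  finally show ?thesis by simp
qed

theorem theorem11:
  fixes h k :: int
  assumes "k > 0" and "gcd h k = 1" and "odd (h + k)"
  shows "real_of_int (B1 h k) = (1/2) * (1 - real_of_int h) * real_of_int (hardyS h k)"
proof -
  define q where "q j = (h*j) div k" for j
  define e where "e j = (if even (j + q j) then 1 else -1 :: int)" for j
  have B: "B1 h k = (\<Sum>j\<in>{1..k-1}. e j * q j)"
    unfolding B1_def by (intro sum.cong) (simp_all add: sgn_pow floor_eq floor_eq2 e_def q_def)
  have S: "hardyS h k = - (\<Sum>j\<in>{1..k-1}. e j)"
    unfolding hardyS_def sum_negf[symmetric]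
    by (intro sum.cong) (simp_all add: sgn_pow floor_eq floor_eq2 e_def q_def mult.commute)
  have qr: "q (k - j) = h - 1 - q j" if "j \<in> {1..k-1}" for j
    using refl_div[OF assms(1,2)] that by (simp add: q_def)
  have er: "e (k - j) = e j" if "j \<in> {1..k-1}" for j
  proof -
    have "k - j + q (k - j) = (h + k - 1) - j - q j" using qr[OF that] by simp
    moreover have "even (h + k - 1)" using assms(3) by simp
    ultimately have "even (k - j + q (k - j)) \<longleftrightarrow> even (j + q j)"
      by (metis even_add even_diff)
    then show ?thesis by (simp add: e_def)
  qed
  have "(\<Sum>j\<in>{1..k-1}. e j * q j) = (\<Sum>j\<in>{1..k-1}. e (k - j) * q (k - j))"
    by (rule sum.reindex_bij_witness[of _ "\<lambda>j. k - j" "\<lambda>j. k - j"]) auto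
  also have "\<dots> = (\<Sum>j\<in>{1..k-1}. e j * (h - 1) - e j * q j)"
    by (intro sum.cong) (simp_all add: er qr algebra_simps)
  also have "\<dots> = (h - 1) * (\<Sum>j\<in>{1..k-1}. e j) - (\<Sum>j\<in>{1..k-1}. e j * q j)"
    by (simp add: sum_subtractf sum_distrib_left mult.commute)
  finally have "2 * B1 h k = (1 - h) * hardyS h k" using B S by (simp add: algebra_simps)
  then have "real_of_int (2 * B1 h k) = real_of_int ((1 - h) * hardyS h k)" by simp
  then show ?thesis by simp
qed

end
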